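(* Let $a, b$ be natural numbers with $a, b > 0$, and let $d > 1$ be a natural number. (1) $a$ and $b$ are relatively prime if and only if there are $r, s \in \mathbb{N}_0$ such that $(a-1)(b-1) = ra + sb$. (2) Suppose $a$ and $b$ are divisible by $d$. Then $\gcd(a,b) = d$ if and only if there are $r, s \in \mathbb{N}_0$ such that $d(a/d - 1)(b/d - 1) = ra + sb$.
   Context: $\mathbb{N}_0$ denotes the set of natural numbers including $0$. *)

theory Defs
  imports Main
begin

end

theory Submission
  imports Defs
begin

lemma part1:
  fixes a b :: nat
  assumes "a > 0" and "b > 0"
  shows "coprime a b \<longleftrightarrow> (\<exists>r s :: nat. (a - 1) * (b - 1) = r * a + s * b)"
proof
  assume cop: "coprime a b"
  define A where "A = int a"
  define B where "B = int b"
  define N where "N = (A - 1) * (B - 1)"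
  have Bpos: "B > 0" using assms B_def by simp
  have Apos: "A > 0" using assms A_def by simp
  have "gcd A B = 1" using cop unfolding A_def B_def
    by (simp add: coprime_iff_gcd_eq_1 gcd_int_def)
  then obtain u v where uv: "u * A + v * B = 1" using bezout_int by metis
  define x0 where "x0 = (N * u) mod B"
  have "B dvd (N * u - x0)" unfolding x0_def by (simp add: mod_eq_dvd_iff minus_mod_eq_mult_div)
  then obtain k where k: "N * u - x0 = B * k" by (auto simp: dvd_def)
  have "N - x0 * A = N * (u*A + v*B) - x0 * A" using uv by simp
  also have "\<dots> = (N*u - x0) * A + N * v * B" by (simp add: algebra_simps)
  also have "\<dots> = B * (k * A + N * v)" using k by (simp add: algebra_simps)
  finally have eq: "N - x0 * A = B * (k * A + N * v)" .
  define y0 where "y0 = k * A + N * v"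
  have x0b: "0 \<le> x0" "x0 \<le> B - 1" using Bpos unfolding x0_def by auto
  have "x0 * A \<le> (B - 1) * A" using x0b Apos by (intro mult_right_mono) auto
  hence "B * y0 > - B" using eq unfolding y0_def N_def using Apos Bpos
    by (simp add: algebra_simps)
  hence "B * (-1) < B * y0" by simp
  hence "-1 < y0" using Bpos mult_less_cancel_left_pos by blast
  hence y0: "y0 \<ge> 0" by simp
  have "int ((a - 1) * (b - 1)) = N" using assms unfolding N_def A_def B_def by (simp add: of_nat_diff)
  also have "\<dots> = x0 * A + y0 * B" using eq unfolding y0_def by (simp add: algebra_simps)
  also have "\<dots> = int (nat x0 * a + nat y0 * b)" using x0b y0 A_def B_def by simp
  finally have "(a - 1) * (b - 1) = nat x0 * a + nat y0 * b" by (simp only: of_nat_eq_iff)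
  thus "\<exists>r s :: nat. (a - 1) * (b - 1) = r * a + s * b" by blast
next
  assume "\<exists>r s :: nat. (a - 1) * (b - 1) = r * a + s * b"
  then obtain r s where rs: "(a - 1) * (b - 1) = r * a + s * b" by blast
  define g where "g = gcd a b"
  have ga: "g dvd a" and gb: "g dvd b" unfolding g_def by auto
  have "(a - 1) * (b - 1) + a + b = a * b + 1" using assms
    by (cases a; cases b) (auto simp: algebra_simps)
  hence "r * a + s * b + a + b = a * b + 1" using rs by simp
  moreover have "g dvd r * a + s * b + a + b" using ga gb by simp
  ultimately have "g dvd a * b + 1" by simp
  moreover have "g dvd a * b" using ga by simp
  ultimately have "g dvd 1" using dvd_add_right_iff by blast
  thus "coprime a b" unfolding g_def by (simp add: coprime_iff_gcd_eq_1)
qed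

theorem theorem4p11:
  fixes a b d :: nat
  assumes "a > 0" and "b > 0" and "d > 1"
  shows "(coprime a b \<longleftrightarrow> (\<exists>r s :: nat. (a - 1) * (b - 1) = r * a + s * b))
     \<and> (d dvd a \<longrightarrow> d dvd b \<longrightarrow>
          (gcd a b = d \<longleftrightarrow> (\<exists>r s :: nat. d * (a div d - 1) * (b div d - 1) = r * a + s * b)))"
proof (intro conjI impI)
  show "coprime a b \<longleftrightarrow> (\<exists>r s :: nat. (a - 1) * (b - 1) = r * a + s * b)"
    using part1 assms by blast
  assume da: "d dvd a" and db: "d dvd b"
  then obtain a' b' where a: "a = d * a'" and b: "b = d * b'" by (auto simp: dvd_def)
  have d0: "d > 0" using assms by simp
  have a'0: "a' > 0" and b'0: "b' > 0" using assms a b by auto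
  have ad: "a div d = a'" "b div d = b'" using a b d0 by auto
  have "gcd a b = d \<longleftrightarrow> gcd a' b' = 1" using a b d0 by (simp add: gcd_mult_left)
  also have "\<dots> \<longleftrightarrow> coprime a' b'" by (simp add: coprime_iff_gcd_eq_1)
  also have "\<dots> \<longleftrightarrow> (\<exists>r s :: nat. (a' - 1) * (b' - 1) = r * a' + s * b')"
    using part1 a'0 b'0 by blast
  also have "\<dots> \<longleftrightarrow> (\<exists>r s :: nat. d * (a div d - 1) * (b div d - 1) = r * a + s * b)"
  proof -
    have e1: "d * (a div d - 1) * (b div d - 1) = d * ((a' - 1) * (b' - 1))" unfolding ad by simp
    have e2: "\<And>r s. r * a + s * b = d * (r * a' + s * b')" unfolding a b by (simp add: algebra_simps)
    have "\<And>r s. ((a' - 1) * (b' - 1) = r * a' + s * b') \<longleftrightarrow>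
            (d * ((a' - 1) * (b' - 1)) = d * (r * a' + s * b'))" using d0 by simp
    thus ?thesis by (simp only: e1 e2)
  qed
  finally show "gcd a b = d \<longleftrightarrow> (\<exists>r s :: nat. d * (a div d - 1) * (b div d - 1) = r * a + s * b)" .
qed

end
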